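(* Let $T$ be any $3 \times 9$ matrix with entries in the ring $\mathbb{Z}_{2^{64}}$. Then there exist three distinct columns of $T$ such that the $3 \times 3$ submatrix formed by these columns has even determinant (that is, its determinant is divisible by $2$ in $\mathbb{Z}_{2^{64}}$), and consequently this $3\times 3$ submatrix, viewed as a map $\mathbb{Z}_{2^{64}}^3 \to \mathbb{Z}_{2^{64}}^3$, has a non-trivial kernel.
   Context: $\mathbb{Z}_{2^{64}}$ denotes the ring of integers modulo $2^{64}$. Parity of an element of $\mathbb{Z}_{2^{64}}$ is well defined since $2$ divides $2^{64}$. *)

theory Defs
  imports "HOL-Analysis.Analysis" "HOL-Library.Word"
begin

text \<open>A 3x9 matrix is an element of
  64 word ^ 9 ^ 3 (3 rows, 9 columns).\<close>

definition col_submatrix :: "'a ^ 'n ^ 'm \<Rightarrow> ('k \<Rightarrow> 'n) \<Rightarrow> 'a ^ 'k ^ 'm" where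
  "col_submatrix T c = (\<chi> i k. T $ i $ c k)"

end

theory Submission
  imports Defs
begin

lemma det3_even:
  fixes M :: "'a::comm_ring_1^3^3"
  assumes h: "\<And>i. M$i$2 = M$i$1 + 2 * d i"
  shows "2 dvd det M"
proof -
  let ?N = "(\<chi> i j. if j = 2 then d i else M$i$j) :: 'a^3^3"
  have "det M = 2 * det ?N"
    unfolding det_3 h by (simp add: algebra_simps)
  then show ?thesis by simp
qed

lemma kernel_of_even:
  fixes M :: "64 word^3^3"
  assumes e: "even (det M)"
  shows "\<exists>x. x \<noteq> 0 \<and> M *v x = 0"
proof (rule ccontr)
  assume nx: "\<not> ?thesis"
  have "inj ((*v) M)"
  proof (rule injI)
    fix x y assume "M *v x = M *v y"
    then have "M *v (x - y) = 0" by (simp add: matrix_vector_mult_diff_distrib)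
    with nx have "x - y = 0" by blast
    then show "x = y" by simp
  qed
  then have "surj ((*v) M)" by (rule finite_UNIV_inj_surj[OF finite_class.finite_UNIV])
  then have "\<forall>j. \<exists>b. M *v b = axis j 1" by (metis surjD)
  then obtain b where b: "\<And>j. M *v b j = axis j 1" by metis
  define B :: "64 word^3^3" where "B = (\<chi> i j. b j $ i)"
  have "M ** B = mat 1"
  proof -
    have "(M ** B) $ i $ j = mat 1 $ i $ j" for i j
    proof -
      have "(M ** B) $ i $ j = (M *v b j) $ i"
        by (simp add: matrix_matrix_mult_def matrix_vector_mult_def B_def)
      also have "\<dots> = mat 1 $ i $ j" by (simp add: b axis_def mat_def)
      finally show ?thesis .
    qed
    then show ?thesis by (simp add: vec_eq_iff)
  qed
  then have "det M * det B = 1" by (metis det_mul det_I)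
  then have "det M dvd 1" by (metis dvdI)
  with e have "even (1::64 word)" using dvd_trans by blast
  then show False by simp
qed

theorem mainTheorem1:
  fixes T :: "64 word ^ 9 ^ 3"
  shows "\<exists>c :: 3 \<Rightarrow> 9. inj c \<and> even (det (col_submatrix T c))
           \<and> (\<exists>x :: 64 word ^ 3. x \<noteq> 0 \<and> col_submatrix T c *v x = 0)"
proof -
  let ?f = "\<lambda>j::9. (\<lambda>i::3. even (T$i$j))"
  have "\<not> inj ?f"
  proof
    assume "inj ?f"
    then have "card (UNIV::9 set) \<le> card (UNIV :: (3 \<Rightarrow> bool) set)"
      by (rule card_inj_on_le) auto
    moreover have "card (UNIV :: (3 \<Rightarrow> bool) set) = 8"
      by (simp add: card_fun)
    ultimately show False by simp
  qed
  then obtain a b where ab: "a \<noteq> b" "?f a = ?f b" unfolding inj_def by blast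
  obtain e :: 9 where e: "e \<noteq> a" "e \<noteq> b"
  proof -
    have "card {a, b} < card (UNIV::9 set)" by (simp add: card_insert_if)
    then have "UNIV - {a,b} \<noteq> {}" by (metis Diff_eq_empty_iff card_mono finite leD)
    then show ?thesis using that by blast
  qed
  define c :: "3 \<Rightarrow> 9" where "c = (\<lambda>k. if k = 1 then a else if k = 2 then b else e)"
  have k3: "k = 1 \<or> k = 2 \<or> k = 3" for k :: 3
    using exhaust_3 by blast
  have "inj c"
    unfolding inj_def c_def using ab e k3 by auto
  let ?M = "col_submatrix T c"
  have "\<exists>d. T$i$b = T$i$a + 2 * d" for i
  proof -
    have "even (T$i$a) = even (T$i$b)" using ab(2) by meson
    then have "even (T$i$b - T$i$a)" by auto
    then obtain d where "T$i$b - T$i$a = 2 * d" by blast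
    then show ?thesis by (metis add_diff_cancel_left' diff_add_cancel add.commute)
  qed
  then obtain d where d: "\<And>i. T$i$b = T$i$a + 2 * d i" by metis
  have "\<And>i. ?M$i$2 = ?M$i$1 + 2 * d i"
    by (simp add: col_submatrix_def c_def d)
  then have ev: "even (det ?M)" by (rule det3_even)
  show ?thesis using \<open>inj c\<close> ev kernel_of_even[OF ev] by blast
qed

end
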